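(* Let $\Lambda$ be a $\mathbb Z$-lattice with an automorphism $M_h$ of finite order. Let $\Lambda^{(1)},\dots,\Lambda^{(k)}\subset\Lambda$ be Orlik blocks with cyclic generators $e^{(1)},\dots,e^{(k)}$ such that $\Lambda^{(1)}+\dots+\Lambda^{(k)}=\Lambda^{(1)}\oplus\dots\oplus\Lambda^{(k)}$, and let $g$ be an automorphism of $\Lambda^{(1)}\oplus\dots\oplus\Lambda^{(k)}$ commuting with $M_h$. Then there are unique polynomials $p_{ij}\in\mathbb Z[t]$ of degree $<\mathrm{rank}\,\Lambda^{(i)}$ with $g(e^{(j)})=\sum_{i=1}^kp_{ij}(M_h)(e^{(i)})$. Suppose moreover that $p_0\in\mathbb Z[t]$ divides $\gcd(p_{\Lambda^{(1)}},\dots,p_{\Lambda^{(k)}})$ and that $g=\mathrm{id}$ on $\Lambda^{(j)}_{p_{\Lambda^{(j)}}/p_0}$ for every $j$. Then $p_{ij}=\delta_{ij}+\frac{p_{\Lambda^{(i)}}}{p_0}q_{ij}$ for suitable $q_{ij}\in\mathbb Z[t]$ of degree $<\deg p_0$. If furthermore $\xi$ is a root of unity with $p_0(\xi)=0$, then with respect to the eigenvectors $v(e^{(j)},\xi)\in\Lambda^{(j)}_\xi$, $$g(v(e^{(j)},\xi))=\sum_{i=1}^k\Bigl(\delta_{ij}+\frac{p_{\Lambda^{(j)}}}{p_0}q_{ij}\Bigr)(\xi)\cdot v(e^{(i)},\xi).$$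
   Context: An Orlik block is a nonzero primitive $M_h$-invariant sublattice $\Lambda^{(1)}\subset\Lambda$ with a cyclic generator $e^{(1)}$, i.e. $\Lambda^{(1)}=\bigoplus_{j=0}^{\deg p_{\Lambda^{(1)}}-1}\mathbb ZM_h^j(e^{(1)})$, where $p_{\Lambda^{(1)}}$ is the characteristic polynomial of $M_h$ on $\Lambda^{(1)}$. For an $M_h$-invariant sublattice $B$ and a product $p$ of cyclotomic polynomials dividing $p_B$, $B_p:=(\bigoplus_{\lambda:p(\lambda)=0}B_\lambda)\cap B$, where $B_\lambda=\ker(M_h-\lambda)\subset B\otimes\mathbb C$. For an eigenvalue $\lambda$ of $M_h$ on an Orlik block with generator $e$, $v(e,\lambda):=\frac{p_{\Lambda^{(1)}}}{t-\lambda}(M_h)(e)$ (an eigenvector with eigenvalue $\lambda$). *)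

theory Defs
  imports "Jordan_Normal_Form.Char_Poly" "HOL-Library.Function_Algebras"
begin

text \<open>Ambient space: the lattice \<Lambda> is modelled as the standard lattice of
  integer points inside \<Lambda> \<otimes> \<complex> = ('i \<Rightarrow> complex), for a finite index type 'i.\<close>

definition lat :: "('i::finite \<Rightarrow> complex) set" where
  "lat = {v. \<forall>i. v i \<in> \<int>}"

definition smul :: "complex \<Rightarrow> ('i \<Rightarrow> complex) \<Rightarrow> ('i \<Rightarrow> complex)" where
  "smul c v = (\<lambda>i. c * v i)"

definition mv :: "('i::finite \<Rightarrow> 'i \<Rightarrow> complex) \<Rightarrow> ('i \<Rightarrow> complex) \<Rightarrow> ('i \<Rightarrow> complex)" where
  "mv A v = (\<lambda>i. \<Sum>j\<in>UNIV. A i j * v j)"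

definition papp :: "complex poly \<Rightarrow> ('i::finite \<Rightarrow> 'i \<Rightarrow> complex) \<Rightarrow> ('i \<Rightarrow> complex) \<Rightarrow> ('i \<Rightarrow> complex)" where
  "papp p A v = (\<Sum>i\<le>degree p. smul (coeff p i) ((mv A ^^ i) v))"

definition sublattice :: "('i::finite \<Rightarrow> complex) set \<Rightarrow> bool" where
  "sublattice B \<longleftrightarrow> B \<subseteq> lat \<and> 0 \<in> B \<and> (\<forall>x\<in>B. \<forall>y\<in>B. x + y \<in> B) \<and> (\<forall>x\<in>B. - x \<in> B)"

text \<open>primitive: \<Lambda>/B is torsion free\<close>
definition primitive :: "('i::finite \<Rightarrow> complex) set \<Rightarrow> bool" where
  "primitive B \<longleftrightarrow> (\<forall>x\<in>lat. \<forall>m::nat. 0 < m \<longrightarrow> smul (of_nat m) x \<in> B \<longrightarrow> x \<in> B)"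

definition invariant :: "('i::finite \<Rightarrow> 'i \<Rightarrow> complex) \<Rightarrow> ('i \<Rightarrow> complex) set \<Rightarrow> bool" where
  "invariant A B \<longleftrightarrow> mv A ` B \<subseteq> B"

definition zcomb :: "('i \<Rightarrow> complex) list \<Rightarrow> ('i \<Rightarrow> complex) set" where
  "zcomb bs = {(\<Sum>i<length bs. smul (of_int (c i)) (bs ! i)) | c :: nat \<Rightarrow> int. True}"

definition zindep :: "('i \<Rightarrow> complex) list \<Rightarrow> bool" where
  "zindep bs \<longleftrightarrow> (\<forall>c :: nat \<Rightarrow> int. (\<Sum>i<length bs. smul (of_int (c i)) (bs ! i)) = 0
      \<longrightarrow> (\<forall>i<length bs. c i = 0))"

definition zbasis :: "('i \<Rightarrow> complex) set \<Rightarrow> ('i \<Rightarrow> complex) list \<Rightarrow> bool" where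
  "zbasis B bs \<longleftrightarrow> zindep bs \<and> B = zcomb bs"

definition charpoly_on :: "('i::finite \<Rightarrow> 'i \<Rightarrow> complex) \<Rightarrow> ('i \<Rightarrow> complex) set \<Rightarrow> int poly \<Rightarrow> bool" where
  "charpoly_on A B p \<longleftrightarrow> (\<exists>bs C. zbasis B bs \<and> C \<in> carrier_mat (length bs) (length bs) \<and>
     (\<forall>j<length bs. mv A (bs ! j) = (\<Sum>i<length bs. smul (of_int (C $$ (i, j))) (bs ! i))) \<and>
     p = char_poly C)"

definition cyclic_generator :: "('i::finite \<Rightarrow> 'i \<Rightarrow> complex) \<Rightarrow> ('i \<Rightarrow> complex) set \<Rightarrow> ('i \<Rightarrow> complex) \<Rightarrow> nat \<Rightarrow> bool" where
  "cyclic_generator A B e d \<longleftrightarrow> e \<in> B \<and> zbasis B (map (\<lambda>j. (mv A ^^ j) e) [0..<d])"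

definition orlik_block :: "('i::finite \<Rightarrow> 'i \<Rightarrow> complex) \<Rightarrow> ('i \<Rightarrow> complex) set \<Rightarrow> ('i \<Rightarrow> complex) \<Rightarrow> int poly \<Rightarrow> bool" where
  "orlik_block A B e p \<longleftrightarrow> B \<noteq> {0} \<and> sublattice B \<and> primitive B \<and> invariant A B \<and>
     charpoly_on A B p \<and> cyclic_generator A B e (degree p)"

definition cspan :: "('i \<Rightarrow> complex) set \<Rightarrow> ('i \<Rightarrow> complex) set" where
  "cspan B = {(\<Sum>v\<in>F. smul (c v) v) | F c. finite F \<and> F \<subseteq> B}"

definition eigsp :: "('i::finite \<Rightarrow> 'i \<Rightarrow> complex) \<Rightarrow> ('i \<Rightarrow> complex) set \<Rightarrow> complex \<Rightarrow> ('i \<Rightarrow> complex) set" where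
  "eigsp A B l = {x \<in> cspan B. mv A x = smul l x}"

definition subl :: "('i::finite \<Rightarrow> 'i \<Rightarrow> complex) \<Rightarrow> ('i \<Rightarrow> complex) set \<Rightarrow> int poly \<Rightarrow> ('i \<Rightarrow> complex) set" where
  "subl A B p = {x. \<exists>F w. finite F \<and> F \<subseteq> {l. poly (map_poly of_int p) l = 0} \<and>
       (\<forall>l\<in>F. w l \<in> eigsp A B l) \<and> x = (\<Sum>l\<in>F. w l)} \<inter> B"

definition vvec :: "('i::finite \<Rightarrow> 'i \<Rightarrow> complex) \<Rightarrow> int poly \<Rightarrow> ('i \<Rightarrow> complex) \<Rightarrow> complex \<Rightarrow> ('i \<Rightarrow> complex)" where
  "vvec A p e l = papp (map_poly of_int p div [:- l, 1:]) A e"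

definition lsum :: "(nat \<Rightarrow> ('i \<Rightarrow> complex) set) \<Rightarrow> nat \<Rightarrow> ('i \<Rightarrow> complex) set" where
  "lsum L k = {(\<Sum>j<k. x j) | x. \<forall>j<k. x j \<in> L j}"

end

theory Submission imports Defs begin

lemma lam0[simp]: "(\<lambda>a::'i. 0::complex) = 0"
  by (simp add: zero_fun_def)

definition lin :: "(('i \<Rightarrow> complex) \<Rightarrow> ('i \<Rightarrow> complex)) \<Rightarrow> bool" where
  "lin f \<longleftrightarrow> (\<forall>x y. f (x + y) = f x + f y) \<and> (\<forall>c x. f (smul c x) = smul c (f x))"

lemma smul_0[simp]: "smul 0 x = 0" "smul c 0 = 0" "smul 1 x = x"
  by (auto simp: smul_def fun_eq_iff)

lemma smul_add: "smul c (x + y) = smul c x + smul c y" "smul (c + d) x = smul c x + smul d x"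
  by (auto simp: smul_def fun_eq_iff algebra_simps)

lemma smul_smul[simp]: "smul c (smul d x) = smul (c * d) x"
  by (auto simp: smul_def fun_eq_iff algebra_simps)

lemma smul_minus: "smul c (- x) = - smul c x" "smul (- c) x = - smul c x"
  "smul c (x - y) = smul c x - smul c y" "smul (c - d) x = smul c x - smul d x"
  by (auto simp: smul_def fun_eq_iff algebra_simps)

lemma sum_app: "(sum f S :: 'i \<Rightarrow> complex) i = (\<Sum>s\<in>S. f s i)"
  by (induction S rule: infinite_finite_induct) auto

lemma smul_sum: "smul c (sum f S) = (\<Sum>s\<in>S. smul c (f s))"
  by (auto simp: smul_def fun_eq_iff sum_distrib_left sum_app)

lemma smul_sum2: "smul (sum f S) x = (\<Sum>s\<in>S. smul (f s) x)"
  by (auto simp: smul_def fun_eq_iff sum_distrib_right sum_app)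

lemma lin_0: "lin f \<Longrightarrow> f 0 = 0"
  unfolding lin_def by (metis smul_0(1))

lemma lin_add: "lin f \<Longrightarrow> f (x + y) = f x + f y" unfolding lin_def by blast
lemma lin_smul: "lin f \<Longrightarrow> f (smul c x) = smul c (f x)" unfolding lin_def by blast
lemma lin_uminus: "lin f \<Longrightarrow> f (- x) = - f x"
  using lin_smul[of f "-1" x] by (simp add: smul_minus)
lemma lin_diff: "lin f \<Longrightarrow> f (x - y) = f x - f y"
  by (metis diff_conv_add_uminus lin_add lin_uminus)
lemma lin_sum: "lin f \<Longrightarrow> f (sum g S) = (\<Sum>s\<in>S. f (g s))"
  by (induction S rule: infinite_finite_induct) (auto simp: lin_0 lin_add)

lemma lin_comp: "lin f \<Longrightarrow> lin g \<Longrightarrow> lin (f \<circ> g)"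
  unfolding lin_def by auto

lemma lin_id: "lin id" unfolding lin_def by auto

lemma lin_pow: "lin f \<Longrightarrow> lin (f ^^ n)"
  by (induction n) (auto intro: lin_comp lin_id)

lemma lin_mv: "lin (mv A)"
  unfolding lin_def mv_def smul_def
  by (auto simp: fun_eq_iff algebra_simps sum.distrib sum_distrib_left)

lemma lin_mvpow: "lin (mv A ^^ n)"
  by (rule lin_pow[OF lin_mv])

lemma papp_N: assumes "degree p < N"
  shows "papp p A v = (\<Sum>i<N. smul (coeff p i) ((mv A ^^ i) v))"
proof -
  have "papp p A v = (\<Sum>i\<in>{..degree p}. smul (coeff p i) ((mv A ^^ i) v))"
    unfolding papp_def by simp
  also have "\<dots> = (\<Sum>i<N. smul (coeff p i) ((mv A ^^ i) v))"
    by (rule sum.mono_neutral_left) (use assms in \<open>auto simp: coeff_eq_0\<close>)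
  finally show ?thesis .
qed

lemma papp_pCons: "papp (pCons a p) A v = smul a v + mv A (papp p A v)"
proof -
  define N where "N = degree p + 1"
  have "papp (pCons a p) A v = (\<Sum>i<Suc N. smul (coeff (pCons a p) i) ((mv A ^^ i) v))"
    by (rule papp_N) (auto simp: N_def degree_pCons_le le_imp_less_Suc)
  also have "\<dots> = smul a v + (\<Sum>j<N. smul (coeff p j) ((mv A ^^ Suc j) v))"
    by (subst sum.lessThan_Suc_shift) simp
  also have "(\<Sum>j<N. smul (coeff p j) ((mv A ^^ Suc j) v)) = (\<Sum>j<N. mv A (smul (coeff p j) ((mv A ^^ j) v)))"
    by (simp add: lin_smul[OF lin_mv])
  also have "\<dots> = mv A (\<Sum>j<N. smul (coeff p j) ((mv A ^^ j) v))"
    by (simp add: lin_sum[OF lin_mv])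
  also have "(\<Sum>j<N. smul (coeff p j) ((mv A ^^ j) v)) = papp p A v"
    by (rule papp_N[symmetric]) (simp add: N_def)
  finally show ?thesis .
qed

lemma papp_0[simp]: "papp 0 A v = 0"
  unfolding papp_def by simp

lemma papp_const[simp]: "papp [:c:] A v = smul c v"
  using papp_pCons[of c 0 A v] by (simp add: lin_0[OF lin_mv])

lemma papp_1[simp]: "papp 1 A v = v"
  by (simp add: one_pCons)

lemma papp_add: "papp (p + q) A v = papp p A v + papp q A v"
proof (induction p q rule: poly_induct2)
  case 0 then show ?case by simp
next
  case (pCons a p b q)
  have "papp (pCons a p + pCons b q) A v = papp (pCons (a+b) (p+q)) A v" by simp
  also have "\<dots> = smul (a+b) v + mv A (papp (p+q) A v)" by (rule papp_pCons)
  also have "\<dots> = smul a v + smul b v + (mv A (papp p A v) + mv A (papp q A v))"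
    using pCons by (simp only: smul_add lin_add[OF lin_mv])
  also have "\<dots> = papp (pCons a p) A v + papp (pCons b q) A v"
    by (simp only: papp_pCons ac_simps)
  finally show ?case .
qed

lemma papp_smult: "papp (Polynomial.smult c p) A v = smul c (papp p A v)"
proof (induction p)
  case 0 then show ?case by simp
next
  case (pCons a p)
  have "papp (Polynomial.smult c (pCons a p)) A v = papp (pCons (c*a) (Polynomial.smult c p)) A v" by simp
  also have "\<dots> = smul (c*a) v + mv A (smul c (papp p A v))" by (simp only: papp_pCons pCons)
  also have "\<dots> = smul c (papp (pCons a p) A v)"
    by (simp only: papp_pCons smul_add lin_smul[OF lin_mv] smul_smul)
  finally show ?case .
qed

lemma papp_uminus: "papp (- p) A v = - papp p A v"
  using papp_smult[of "-1" p A v] by (simp add: smul_minus)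

lemma papp_diff: "papp (p - q) A v = papp p A v - papp q A v"
  by (metis diff_conv_add_uminus papp_add papp_uminus)

lemma papp_sum: "papp (sum f S) A v = (\<Sum>s\<in>S. papp (f s) A v)"
  by (induction S rule: infinite_finite_induct) (auto simp: papp_add)

lemma lin_papp: "lin (papp p A)"
  unfolding lin_def
proof (induction p)
  case 0 then show ?case by simp
next
  case (pCons a p)
  then have IH1: "\<And>x y. papp p A (x + y) = papp p A x + papp p A y"
    and IH2: "\<And>c x. papp p A (smul c x) = smul c (papp p A x)" by blast+
  show ?case
  proof (intro conjI allI)
    fix x y
    show "papp (pCons a p) A (x + y) = papp (pCons a p) A x + papp (pCons a p) A y"
      by (simp only: papp_pCons IH1 smul_add lin_add[OF lin_mv] ac_simps)
  next
    fix c x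
    show "papp (pCons a p) A (smul c x) = smul c (papp (pCons a p) A x)"
      by (simp only: papp_pCons IH2 smul_add lin_smul[OF lin_mv] smul_smul mult.commute)
  qed
qed

lemma papp_pCons0: "papp (pCons 0 p) A v = mv A (papp p A v)"
  by (simp add: papp_pCons)

lemma papp_mult: "papp (p * q) A v = papp p A (papp q A v)"
proof (induction p)
  case 0 then show ?case by simp
next
  case (pCons a p)
  have "pCons a p * q = Polynomial.smult a q + pCons 0 (p * q)" by simp
  then show ?case using pCons
    by (simp only: papp_add papp_smult papp_pCons0 papp_pCons smul_0 add_0_left)
qed

lemma papp_mv: "papp p A (mv A v) = mv A (papp p A v)"
proof (induction p)
  case 0 then show ?case by (simp add: lin_0[OF lin_mv])
next
  case (pCons a p)
  then show ?case by (simp only: papp_pCons lin_add[OF lin_mv] lin_smul[OF lin_mv])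
qed

lemma papp_X: "papp [:0,1:] A v = mv A v"
  by (simp only: papp_pCons0 papp_const smul_0)

lemma papp_monom: "papp (monom c n) A v = smul c ((mv A ^^ n) v)"
proof (induction n)
  case 0 then show ?case by (simp add: monom_0)
next
  case (Suc n)
  then show ?case by (simp add: monom_Suc papp_pCons0 lin_smul[OF lin_mv])
qed

lemma papp_comm: "papp p A (papp q A v) = papp q A (papp p A v)"
  by (metis mult.commute papp_mult)

abbreviation ia :: "int poly \<Rightarrow> ('i::finite \<Rightarrow> 'i \<Rightarrow> complex) \<Rightarrow> ('i \<Rightarrow> complex) \<Rightarrow> ('i \<Rightarrow> complex)" where
  "ia f A v \<equiv> papp (of_int_poly f) A v"

lemma ia_add: "ia (f + g) A v = ia f A v + ia g A v"
  by (simp only: of_int_poly_hom.hom_add papp_add)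
lemma ia_diff: "ia (f - g) A v = ia f A v - ia g A v"
  by (simp only: of_int_poly_hom.hom_minus papp_diff)
lemma ia_mult: "ia (f * g) A v = ia f A (ia g A v)"
  by (simp only: of_int_poly_hom.hom_mult papp_mult)
lemma ia_sum: "ia (sum f S) A v = (\<Sum>s\<in>S. ia (f s) A v)"
  by (simp only: of_int_poly_hom.hom_sum papp_sum)
lemma ia_0[simp]: "ia 0 A v = 0" by simp
lemma ia_1[simp]: "ia 1 A v = v" by simp
lemma ia_v0[simp]: "ia f A 0 = 0" by (rule lin_0[OF lin_papp])

lemma ia_const: "ia [:c:] A v = smul (of_int c) v"
proof -
  have "of_int_poly [:c:] = ([:of_int c:] :: complex poly)"
    by (auto simp: poly_eq_iff coeff_map_poly coeff_pCons split: nat.split)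
  then show ?thesis by simp
qed

lemma annih_basis:
  fixes C :: "int mat"
  assumes C: "C \<in> carrier_mat n n" and n: "length bs = n"
  and act: "\<forall>j<n. mv A (bs!j) = (\<Sum>i<n. smul (of_int (C$$(i,j))) (bs!i))"
  and l: "l < n"
  shows "ia (char_poly C) A (bs!l) = 0"
proof -
  define X where "X = char_poly_matrix C"
  have X: "X \<in> carrier_mat n n" unfolding X_def using C by simp
  define Y where "Y = adj_mat X"
  have Y: "Y \<in> carrier_mat n n" and XY: "X * Y = det X \<cdot>\<^sub>m 1\<^sub>m n"
    using adj_mat[OF X] unfolding Y_def by auto
  have Xij: "X$$(i,j) = (if i=j then [:0,1:] else 0) + [:- C$$(i,j):]" if "i<n" "j<n" for i j
    using that C unfolding X_def char_poly_matrix_def by auto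
  have iaX: "ia (X$$(i,j)) A (bs!i) = (if i=j then mv A (bs!i) else 0) - smul (of_int (C$$(i,j))) (bs!i)"
    if "i<n" "j<n" for i j
  proof -
    have "ia (X$$(i,j)) A (bs!i) = ia (if i=j then [:0,1:] else 0) A (bs!i) + ia [:- C$$(i,j):] A (bs!i)"
      using that by (simp only: Xij ia_add)
    also have "ia (if i=j then [:0,1:] else 0) A (bs!i) = (if i=j then mv A (bs!i) else 0)"
      by (simp add: papp_X)
    also have "ia [:- C$$(i,j):] A (bs!i) = - smul (of_int (C$$(i,j))) (bs!i)"
      by (simp add: smul_minus ia_const)
    finally show ?thesis by (simp only: diff_conv_add_uminus)
  qed
  have step1: "(\<Sum>i<n. ia (X$$(i,j)) A (bs!i)) = 0" if j: "j<n" for j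
  proof -
    have "(\<Sum>i<n. ia (X$$(i,j)) A (bs!i)) = (\<Sum>i<n. (if i=j then mv A (bs!i) else 0) - smul (of_int (C$$(i,j))) (bs!i))"
      using j by (intro sum.cong refl iaX) auto
    also have "\<dots> = (\<Sum>i<n. (if i=j then mv A (bs!i) else 0)) - (\<Sum>i<n. smul (of_int (C$$(i,j))) (bs!i))"
      by (rule sum_subtractf)
    also have "(\<Sum>i<n. (if i=j then mv A (bs!i) else 0)) = mv A (bs!j)"
      using j by (subst sum.delta) auto
    finally show ?thesis using act j by simp
  qed
  have "0 = (\<Sum>j<n. ia (Y$$(j,l)) A (\<Sum>i<n. ia (X$$(i,j)) A (bs!i)))"
    by (simp add: step1)
  also have "\<dots> = (\<Sum>j<n. \<Sum>i<n. ia (X$$(i,j) * Y$$(j,l)) A (bs!i))"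
    by (simp only: lin_sum[OF lin_papp] ia_mult[symmetric] mult.commute)
  also have "\<dots> = (\<Sum>i<n. \<Sum>j<n. ia (X$$(i,j) * Y$$(j,l)) A (bs!i))"
    by (rule sum.swap)
  also have "\<dots> = (\<Sum>i<n. ia (\<Sum>j<n. X$$(i,j) * Y$$(j,l)) A (bs!i))"
    by (simp only: ia_sum)
  also have "\<dots> = (\<Sum>i<n. ia ((X * Y)$$(i,l)) A (bs!i))"
  proof (intro sum.cong refl)
    fix i assume "i \<in> {..<n}"
    then have "(X * Y)$$(i,l) = (\<Sum>j<n. X$$(i,j) * Y$$(j,l))"
      using X Y l by (auto simp: scalar_prod_def lessThan_atLeast0 intro!: sum.cong)
    then show "ia (\<Sum>j<n. X$$(i,j) * Y$$(j,l)) A (bs!i) = ia ((X * Y)$$(i,l)) A (bs!i)" by simp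
  qed
  also have "\<dots> = (\<Sum>i<n. if i = l then ia (det X) A (bs!i) else 0)"
    using l by (intro sum.cong refl) (auto simp: XY)
  also have "\<dots> = ia (det X) A (bs!l)"
    using l by (subst sum.delta) auto
  finally show ?thesis unfolding X_def char_poly_def by simp
qed

lemma sl_zero: "sublattice B \<Longrightarrow> 0 \<in> B" unfolding sublattice_def by blast
lemma sl_add: "sublattice B \<Longrightarrow> x \<in> B \<Longrightarrow> y \<in> B \<Longrightarrow> x + y \<in> B" unfolding sublattice_def by blast
lemma sl_neg: "sublattice B \<Longrightarrow> x \<in> B \<Longrightarrow> - x \<in> B" unfolding sublattice_def by blast
lemma sl_diff: "sublattice B \<Longrightarrow> x \<in> B \<Longrightarrow> y \<in> B \<Longrightarrow> x - y \<in> B"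
  by (metis diff_conv_add_uminus sl_add sl_neg)
lemma sl_sum: "sublattice B \<Longrightarrow> (\<And>s. s \<in> S \<Longrightarrow> f s \<in> B) \<Longrightarrow> sum f S \<in> B"
  by (induction S rule: infinite_finite_induct) (auto simp: sl_zero sl_add)

lemma sl_nsmul: assumes "sublattice B" "x \<in> B" shows "smul (of_nat n) x \<in> B"
proof (induction n)
  case 0 then show ?case using sl_zero[OF assms(1)] by simp
next
  case (Suc n)
  have "smul (of_nat (Suc n)) x = x + smul (of_nat n) x"
    by (simp only: of_nat_Suc smul_add smul_0)
  then show ?case using sl_add[OF assms(1) assms(2) Suc] by metis
qed

lemma sl_zsmul: assumes "sublattice B" "x \<in> B" shows "smul (of_int c) x \<in> B"
proof (cases "c \<ge> 0")
  case True
  then obtain n where "c = int n" by (metis nonneg_int_cases)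
  then show ?thesis using sl_nsmul[OF assms] by simp
next
  case False
  then have "- c \<ge> 0" by simp
  then obtain n where "- c = int n" by (rule nonneg_int_cases)
  then have "c = - int n" by simp
  then have "smul (of_int c) x = - smul (of_nat n) x" by (simp add: smul_minus)
  then show ?thesis using sl_neg[OF assms(1) sl_nsmul[OF assms]] by simp
qed

lemma inv_pow: "invariant A B \<Longrightarrow> x \<in> B \<Longrightarrow> (mv A ^^ n) x \<in> B"
  by (induction n) (auto simp: invariant_def)

lemma ia_N: "degree f < N \<Longrightarrow> ia f A v = (\<Sum>i<N. smul (of_int (coeff f i)) ((mv A ^^ i) v))"
  by (subst papp_N[of _ N]) simp_all

lemma sl_ia: assumes "sublattice B" "invariant A B" "x \<in> B" shows "ia f A x \<in> B"
proof -
  have "ia f A x = (\<Sum>i<degree f + 1. smul (of_int (coeff f i)) ((mv A ^^ i) x))"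
    by (rule ia_N) simp
  also have "\<dots> \<in> B"
    by (intro sl_sum[OF assms(1)] sl_zsmul[OF assms(1)] inv_pow[OF assms(2,3)])
  finally show ?thesis .
qed

lemma cyc_sum: "(\<Sum>i<length (map (\<lambda>j. (mv A ^^ j) e) [0..<d]). smul (of_int (c i)) (map (\<lambda>j. (mv A ^^ j) e) [0..<d] ! i))
   = (\<Sum>i<d. smul (of_int (c i)) ((mv A ^^ i) e))"
  by (intro sum.cong) auto

lemma low_zero: assumes "cyclic_generator A B e d" "degree f < d" "ia f A e = 0"
  shows "f = 0"
proof -
  have zi: "zindep (map (\<lambda>j. (mv A ^^ j) e) [0..<d])"
    using assms(1) unfolding cyclic_generator_def zbasis_def by blast
  have "(\<Sum>i<d. smul (of_int (coeff f i)) ((mv A ^^ i) e)) = 0"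
    using assms(3) ia_N[OF assms(2), of A e] by simp
  then have c0: "\<forall>i<d. coeff f i = 0"
    using zi[unfolded zindep_def, rule_format, of "coeff f"] unfolding cyc_sum by simp
  show ?thesis
  proof (rule poly_eqI)
    fix n show "coeff f n = coeff 0 n"
    proof (cases "n < d")
      case True then show ?thesis using c0 by simp
    next
      case False then show ?thesis using assms(2) by (simp add: coeff_eq_0)
    qed
  qed
qed

lemma low_exists: assumes "cyclic_generator A B e d" "x \<in> B" "0 < d"
  shows "\<exists>f. degree f < d \<and> x = ia f A e"
proof -
  have "x \<in> zcomb (map (\<lambda>j. (mv A ^^ j) e) [0..<d])"
    using assms(1,2) unfolding cyclic_generator_def zbasis_def by blast
  then obtain c where x: "x = (\<Sum>i<d. smul (of_int (c i)) ((mv A ^^ i) e))"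
    unfolding zcomb_def cyc_sum by blast
  define f where "f = (\<Sum>i<d. monom (c i) i)"
  have cf: "coeff f m = (if m < d then c m else 0)" for m
    unfolding f_def coeff_sum coeff_monom by (subst sum.delta) auto
  have df: "degree f < d"
  proof -
    have "degree f \<le> d - 1" by (rule degree_le) (auto simp: cf)
    then show ?thesis using assms(3) by linarith
  qed
  have "ia f A e = (\<Sum>i<d. smul (of_int (coeff f i)) ((mv A ^^ i) e))" by (rule ia_N[OF df])
  also have "\<dots> = x" unfolding x by (intro sum.cong) (auto simp: cf)
  finally show ?thesis using df by metis
qed

lemma ob_dpos: assumes "orlik_block A B e p" shows "0 < degree p"
proof (rule ccontr)
  assume "\<not> 0 < degree p"
  then have "degree p = 0" by simp
  then have "B = zcomb []" using assms unfolding orlik_block_def cyclic_generator_def zbasis_def by simp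
  then have "B = {0}" unfolding zcomb_def by simp
  then show False using assms unfolding orlik_block_def by blast
qed

lemma ob_monic: fixes A :: "'i::finite \<Rightarrow> 'i \<Rightarrow> complex"
  assumes "orlik_block A B e p" shows "lead_coeff p = 1"
proof -
  from assms obtain bs :: "('i \<Rightarrow> complex) list" and C where C: "C \<in> carrier_mat (length bs) (length bs)"
    and p: "p = char_poly C"
    unfolding orlik_block_def charpoly_on_def by blast
  show ?thesis using degree_monic_char_poly[OF C] p by simp
qed

lemma ob_annih: fixes A :: "'i::finite \<Rightarrow> 'i \<Rightarrow> complex"
  assumes "orlik_block A B e p" shows "ia p A e = 0"
proof -
  from assms obtain bs :: "('i \<Rightarrow> complex) list" and C where zb: "zbasis B bs" and C: "C \<in> carrier_mat (length bs) (length bs)"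
    and act: "\<forall>j<length bs. mv A (bs ! j) = (\<Sum>i<length bs. smul (of_int (C $$ (i, j))) (bs ! i))"
    and p: "p = char_poly C"
    unfolding orlik_block_def charpoly_on_def by blast
  have "e \<in> B" using assms unfolding orlik_block_def cyclic_generator_def by blast
  then obtain c where e: "e = (\<Sum>i<length bs. smul (of_int (c i)) (bs ! i))"
    using zb unfolding zbasis_def zcomb_def by blast
  have "ia p A e = (\<Sum>i<length bs. smul (of_int (c i)) (ia p A (bs ! i)))"
    unfolding e by (simp only: lin_sum[OF lin_papp] lin_smul[OF lin_papp])
  also have "\<dots> = 0"
    using annih_basis[OF C refl act] p by simp
  finally show ?thesis .
qed

lemma ob_dvd: assumes "orlik_block A B e p" "ia f A e = 0" shows "p dvd f"
proof -
  have p0: "p \<noteq> 0" using ob_monic[OF assms(1)] by auto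
  define r where "r = pseudo_mod f p"
  obtain a q where a: "a \<noteq> 0" and eq: "Polynomial.smult a f = p * q + r"
    using pseudo_mod(1)[OF p0] unfolding r_def by blast
  have rd: "r = 0 \<or> degree r < degree p" using pseudo_mod(2)[OF p0] unfolding r_def by blast
  have cg: "cyclic_generator A B e (degree p)" using assms(1) unfolding orlik_block_def by blast
  have "ia (Polynomial.smult a f) A e = ia (p * q) A e + ia r A e" by (simp only: eq ia_add)
  moreover have "ia (Polynomial.smult a f) A e = 0"
  proof -
    have "Polynomial.smult a f = [:a:] * f" by simp
    then show ?thesis using assms(2) by (simp only: ia_mult ia_v0)
  qed
  moreover have "ia (p * q) A e = 0"
    by (simp only: mult.commute[of p q] ia_mult ob_annih[OF assms(1)] ia_v0)
  ultimately have "ia r A e = 0" by simp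
  then have "r = 0" using rd low_zero[OF cg] by blast
  then have "p dvd Polynomial.smult a f" using eq by simp
  then show ?thesis by (rule dvd_monic[OF ob_monic[OF assms(1)] _ a])
qed

lemma papp_eig: assumes "mv A y = smul l y" shows "papp f A y = smul (poly f l) y"
proof (induction f)
  case 0 then show ?case by simp
next
  case (pCons a p)
  have "papp (pCons a p) A y = smul a y + mv A (smul (poly p l) y)"
    by (simp only: papp_pCons pCons)
  also have "\<dots> = smul (poly (pCons a p) l) y"
    by (simp only: lin_smul[OF lin_mv] assms smul_smul smul_add(2)[symmetric] poly_pCons mult.commute)
  finally show ?case .
qed

lemma papp_lin: "papp [:-a,1:] A y = mv A y - smul a y"
  by (simp only: papp_pCons papp_0 lin_0[OF lin_mv] add_0_right add_0_left smul_0(3) smul_minus diff_conv_add_uminus add.commute)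

lemma dec:
  fixes S :: "complex set"
  assumes "finite S" "papp (\<Prod>l\<in>S. [:-l,1:]) A x = 0"
  shows "\<exists>w. x = (\<Sum>l\<in>S. w l) \<and> (\<forall>l\<in>S. mv A (w l) = smul l (w l) \<and> (\<exists>f. w l = papp f A x))"
  using assms
proof (induction S arbitrary: x rule: finite_induct)
  case empty
  then show ?case by simp
next
  case (insert a S)
  define z where "z = papp [:-a,1:] A x"
  have "papp (\<Prod>l\<in>S. [:-l,1:]) A z = papp ((\<Prod>l\<in>S. [:-l,1:]) * [:-a,1:]) A x"
    unfolding z_def by (simp only: papp_mult)
  also have "\<dots> = 0" using insert(1,2,4) by (simp add: mult.commute)
  finally obtain w' where z: "z = (\<Sum>l\<in>S. w' l)"
    and w'e: "\<And>l. l\<in>S \<Longrightarrow> mv A (w' l) = smul l (w' l)"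
    and w'p: "\<And>l. l\<in>S \<Longrightarrow> \<exists>f. w' l = papp f A z"
    using insert(3) by blast
  define w where "w l = (if l = a then x - (\<Sum>l'\<in>S. smul (1/(l'-a)) (w' l')) else smul (1/(l-a)) (w' l))" for l
  have wa: "w a = x - (\<Sum>l'\<in>S. smul (1/(l'-a)) (w' l'))"
    unfolding w_def by (simp only: simp_thms(6) if_True)
  have wS: "\<And>l. l \<in> S \<Longrightarrow> w l = smul (1/(l-a)) (w' l)" using insert(2) unfolding w_def by auto
  have sumS: "(\<Sum>l\<in>S. w l) = (\<Sum>l'\<in>S. smul (1/(l'-a)) (w' l'))"
    by (intro sum.cong refl wS)
  have "(\<Sum>l\<in>insert a S. w l) = w a + (\<Sum>l\<in>S. w l)"
    using insert(1,2) by (rule sum.insert)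
  also have "\<dots> = x" unfolding sumS wa by simp
  finally have xs: "x = (\<Sum>l\<in>insert a S. w l)" by simp
  have eigS: "mv A (w l) = smul l (w l)" if "l \<in> S" for l
    using that w'e by (simp add: wS lin_smul[OF lin_mv] mult.commute)
  have eiga: "mv A (w a) = smul a (w a)"
  proof -
    have e1: "papp [:-a,1:] A (smul (1/(l'-a)) (w' l')) = w' l'" if "l' \<in> S" for l'
    proof -
      have la: "l' - a \<noteq> 0" using that insert(2) by auto
      have "papp [:-a,1:] A (smul (1/(l'-a)) (w' l')) = smul (1/(l'-a)) (mv A (w' l') - smul a (w' l'))"
        by (simp only: lin_smul[OF lin_papp] papp_lin)
      also have "\<dots> = smul (1/(l'-a)) (smul (l' - a) (w' l'))"
        using w'e[OF that] by (simp only: smul_minus(4))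
      also have "\<dots> = w' l'" using la by simp
      finally show ?thesis .
    qed
    have "papp [:-a,1:] A (w a) = z - (\<Sum>l'\<in>S. papp [:-a,1:] A (smul (1/(l'-a)) (w' l')))"
      unfolding wa z_def by (simp only: lin_diff[OF lin_papp] lin_sum[OF lin_papp])
    also have "(\<Sum>l'\<in>S. papp [:-a,1:] A (smul (1/(l'-a)) (w' l'))) = z"
      unfolding z by (rule sum.cong[OF refl e1])
    also have "z - z = 0" by (rule diff_self)
    finally show ?thesis by (simp only: papp_lin right_minus_eq)
  qed
  have pol: "\<exists>f. w l = papp f A x" if "l \<in> insert a S" for l
  proof (cases "l = a")
    case True
    have "\<forall>l'\<in>S. \<exists>f. smul (1/(l'-a)) (w' l') = papp f A x"
    proof
      fix l' assume "l' \<in> S"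
      then obtain f where "w' l' = papp f A z" using w'p by blast
      then have "smul (1/(l'-a)) (w' l') = papp (Polynomial.smult (1/(l'-a)) (f * [:-a,1:])) A x"
        unfolding z_def by (simp only: papp_smult papp_mult)
      then show "\<exists>f. smul (1/(l'-a)) (w' l') = papp f A x" by blast
    qed
    define F where "F l' = (SOME f. smul (1/(l'-a)) (w' l') = papp f A x)" for l'
    have F: "\<forall>l'\<in>S. smul (1/(l'-a)) (w' l') = papp (F l') A x"
    proof
      fix l' assume "l' \<in> S"
      have "\<exists>f. smul (1/(l'-a)) (w' l') = papp f A x" using \<open>\<forall>l'\<in>S. _\<close> \<open>l' \<in> S\<close> by (rule bspec)
      then show "smul (1/(l'-a)) (w' l') = papp (F l') A x" unfolding F_def by (rule someI_ex)
    qed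
    have sF: "(\<Sum>l'\<in>S. smul (1/(l'-a)) (w' l')) = (\<Sum>l'\<in>S. papp (F l') A x)"
      by (rule sum.cong[OF refl]) (rule F[rule_format])
    have "w a = papp (1 - (\<Sum>l'\<in>S. F l')) A x"
      unfolding wa sF by (simp only: papp_diff papp_sum papp_1)
    then show ?thesis unfolding True by (rule exI)
  next
    case False
    then have lS: "l \<in> S" using that by blast
    then obtain f where "w' l = papp f A z" using w'p by blast
    then have "w l = papp (Polynomial.smult (1/(l-a)) (f * [:-a,1:])) A x"
      unfolding z_def wS[OF lS] by (simp only: papp_smult papp_mult)
    then show ?thesis by (rule exI)
  qed
  show ?case
  proof (rule exI[of _ w], intro conjI ballI)
    show "x = sum w (insert a S)" by (rule xs)
  next
    fix l assume l: "l \<in> insert a S"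
    show "mv A (w l) = smul l (w l)"
    proof (cases "l = a")
      case True show ?thesis unfolding True by (rule eiga)
    next
      case False then show ?thesis using l by (intro eigS) blast
    qed
  next
    fix l assume l: "l \<in> insert a S"
    show "\<exists>f. w l = papp f A x" by (rule pol[OF l])
  qed
qed

lemma cspan_zero: "0 \<in> cspan B"
  unfolding cspan_def mem_Collect_eq by (intro exI[of _ "{}"] exI[of _ "\<lambda>_. 0"]) simp

lemma cspan_add: assumes "x \<in> cspan B" "y \<in> cspan B" shows "x + y \<in> cspan B"
proof -
  obtain F1 c1 where x: "x = (\<Sum>v\<in>F1. smul (c1 v) v)" "finite F1" "F1 \<subseteq> B"
    using assms(1) unfolding cspan_def by blast
  obtain F2 c2 where y: "y = (\<Sum>v\<in>F2. smul (c2 v) v)" "finite F2" "F2 \<subseteq> B"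
    using assms(2) unfolding cspan_def by blast
  define c where "c v = (if v \<in> F1 then c1 v else 0) + (if v \<in> F2 then c2 v else 0)" for v
  have "(\<Sum>v\<in>F1 \<union> F2. smul (if v \<in> F1 then c1 v else 0) v) = (\<Sum>v\<in>F1. smul (if v \<in> F1 then c1 v else 0) v)"
    by (rule sum.mono_neutral_right) (use x y in auto)
  also have "\<dots> = x" unfolding x by (intro sum.cong) auto
  finally have X: "(\<Sum>v\<in>F1 \<union> F2. smul (if v \<in> F1 then c1 v else 0) v) = x" .
  have "(\<Sum>v\<in>F1 \<union> F2. smul (if v \<in> F2 then c2 v else 0) v) = (\<Sum>v\<in>F2. smul (if v \<in> F2 then c2 v else 0) v)"
    by (rule sum.mono_neutral_right) (use x y in auto)
  also have "\<dots> = y" unfolding y by (intro sum.cong) auto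
  finally have Y: "(\<Sum>v\<in>F1 \<union> F2. smul (if v \<in> F2 then c2 v else 0) v) = y" .
  have "x + y = (\<Sum>v\<in>F1 \<union> F2. smul (c v) v)"
    unfolding c_def smul_add(2) sum.distrib X Y ..
  then show ?thesis unfolding cspan_def using x y by blast
qed

lemma cspan_sum: "(\<And>s. s \<in> S \<Longrightarrow> f s \<in> cspan B) \<Longrightarrow> sum f S \<in> cspan B"
  by (induction S rule: infinite_finite_induct) (auto simp: cspan_zero cspan_add)

lemma cspan_smul: "v \<in> B \<Longrightarrow> smul c v \<in> cspan B"
  unfolding cspan_def mem_Collect_eq by (intro exI[of _ "{v}"] exI[of _ "\<lambda>_. c"]) simp

lemma cspan_papp: assumes "invariant A B" "x \<in> B" shows "papp f A x \<in> cspan B"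
  unfolding papp_def by (intro cspan_sum cspan_smul inv_pow[OF assms])

lemma unity_poly:
  fixes m :: nat assumes m: "0 < m"
  defines "P \<equiv> (monom 1 m - 1 :: complex poly)"
  shows "(\<Prod>z|poly P z = 0. [:-z, 1:]) = P"
proof -
  have cP: "coeff P n = (if n = m then 1 else if n = 0 then -1 else 0)" for n
    using m unfolding P_def by (auto simp: coeff_1)
  have dP: "degree P = m"
  proof (rule antisym)
    show "degree P \<le> m" by (rule degree_le) (auto simp: cP)
    show "m \<le> degree P" by (rule le_degree) (simp add: cP)
  qed
  have lP: "lead_coeff P = 1" using dP cP by simp
  have pP: "poly P z = z ^ m - 1" for z unfolding P_def by (simp add: poly_monom)
  have dd: "poly (pderiv P) z = of_nat m * z ^ (m - 1)" for z
    unfolding P_def by (simp add: pderiv_diff pderiv_monom poly_monom)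
  have "rsquarefree P"
    unfolding rsquarefree_roots
  proof (intro allI notI)
    fix a assume "poly P a = 0 \<and> poly (pderiv P) a = 0"
    then have a1: "a ^ m = 1" and a2: "of_nat m * a ^ (m - 1) = 0" by (auto simp: pP dd)
    from a1 m have "a \<noteq> 0" by (metis power_0_left zero_neq_one neq0_conv)
    with a2 m show False by simp
  qed
  from complex_poly_decompose_rsquarefree[OF this] lP show ?thesis by simp
qed

lemma unity_kill:
  assumes m: "0 < m" and ord: "(mv A ^^ m) = id"
  shows "papp (\<Prod>z|poly (monom 1 m - 1 :: complex poly) z = 0. [:-z, 1:]) A x = 0"
  unfolding unity_poly[OF m] by (simp add: papp_diff papp_monom ord)

lemma in_subl:
  fixes A :: "'i::finite \<Rightarrow> 'i \<Rightarrow> complex"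
  assumes sl: "sublattice B" and inv: "invariant A B" and x: "x \<in> B"
    and m: "0 < m" and ord: "(mv A ^^ m) = id" and r: "ia r A x = 0"
  shows "x \<in> subl A B r"
proof -
  define S where "S = {z. poly (monom 1 m - 1 :: complex poly) z = 0}"
  have "coeff (monom 1 m - 1 :: complex poly) m = 1" using m by (simp add: coeff_1)
  then have "(monom 1 m - 1 :: complex poly) \<noteq> 0" by (metis coeff_0 zero_neq_one)
  then have fS: "finite S" unfolding S_def by (rule poly_roots_finite)
  define P where "P w \<longleftrightarrow> x = (\<Sum>l\<in>S. w l) \<and> (\<forall>l\<in>S. mv A (w l) = smul l (w l) \<and> (\<exists>f. w l = papp f A x))"
    for w
  define w where "w = (SOME w. P w)"
  have "\<exists>w. P w" unfolding P_def by (rule dec[OF fS unity_kill[OF m ord, of x, folded S_def]])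
  then have "P w" unfolding w_def by (rule someI_ex)
  then have xw: "x = (\<Sum>l\<in>S. w l)" and we: "\<And>l. l \<in> S \<Longrightarrow> mv A (w l) = smul l (w l)"
    and wp: "\<And>l. l \<in> S \<Longrightarrow> \<exists>f. w l = papp f A x"
    unfolding P_def by auto
  define F where "F = {l\<in>S. poly (of_int_poly r) l = 0}"
  have z: "w l = 0" if lS: "l \<in> S" and lF: "l \<notin> F" for l
  proof -
    have c: "poly (of_int_poly r) l \<noteq> 0" using lS lF unfolding F_def by blast
    obtain f where f: "w l = papp f A x" using wp[OF lS] by blast
    have "ia r A (w l) = papp f A (ia r A x)" unfolding f by (rule papp_comm)
    also have "\<dots> = 0" unfolding r by (rule lin_0[OF lin_papp])
    finally have "smul (poly (of_int_poly r) l) (w l) = 0" using papp_eig[OF we[OF lS]] by simp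
    then have "smul (1 / poly (of_int_poly r) l) (smul (poly (of_int_poly r) l) (w l)) = 0" by simp
    then show ?thesis using c by simp
  qed
  have "x = (\<Sum>l\<in>F. w l)"
    unfolding xw by (rule sum.mono_neutral_right) (use fS z in \<open>auto simp: F_def\<close>)
  moreover have "finite F" using fS unfolding F_def by simp
  moreover have "F \<subseteq> {l. poly (of_int_poly r) l = 0}" unfolding F_def by blast
  moreover have "\<forall>l\<in>F. w l \<in> eigsp A B l"
  proof
    fix l assume "l \<in> F"
    then have l: "l \<in> S" unfolding F_def by blast
    obtain f where f: "w l = papp f A x" using wp[OF l] by blast
    show "w l \<in> eigsp A B l" unfolding eigsp_def
      using we[OF l] cspan_papp[OF inv x, of f] f by simp
  qed
  ultimately show ?thesis unfolding subl_def using x by blast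
qed

theorem lemma2p7:
  fixes Mh :: "'i::finite \<Rightarrow> 'i \<Rightarrow> complex"
    and k :: nat
    and L :: "nat \<Rightarrow> ('i \<Rightarrow> complex) set"
    and e :: "nat \<Rightarrow> ('i \<Rightarrow> complex)"
    and pL :: "nat \<Rightarrow> int poly"
    and G :: "'i \<Rightarrow> 'i \<Rightarrow> complex"
  assumes aut: "mv Mh ` lat = lat"
    and fin_order: "\<exists>m>0. (mv Mh ^^ m) = id"
    and blocks: "\<forall>j<k. orlik_block Mh (L j) (e j) (pL j)"
    and direct: "\<forall>x. (\<forall>j<k. x j \<in> L j) \<and> (\<Sum>j<k. x j) = 0 \<longrightarrow> (\<forall>j<k. x j = 0)"
    and g_aut: "bij_betw (mv G) (lsum L k) (lsum L k)"
    and g_comm: "\<forall>x\<in>lsum L k. mv G (mv Mh x) = mv Mh (mv G x)"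
  shows "\<exists>p :: nat \<Rightarrow> nat \<Rightarrow> int poly.
     (\<forall>i<k. \<forall>j<k. degree (p i j) < degree (pL i)) \<and>
     (\<forall>j<k. mv G (e j) = (\<Sum>i<k. papp (map_poly of_int (p i j)) Mh (e i))) \<and>
     (\<forall>p' :: nat \<Rightarrow> nat \<Rightarrow> int poly.
        (\<forall>i<k. \<forall>j<k. degree (p' i j) < degree (pL i)) \<and>
        (\<forall>j<k. mv G (e j) = (\<Sum>i<k. papp (map_poly of_int (p' i j)) Mh (e i)))
        \<longrightarrow> (\<forall>i<k. \<forall>j<k. p' i j = p i j)) \<and>
     (\<forall>p0 :: int poly.
        (\<forall>j<k. p0 dvd pL j) \<and> (\<forall>j<k. \<forall>x\<in>subl Mh (L j) (pL j div p0). mv G x = x)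
        \<longrightarrow> (\<exists>q :: nat \<Rightarrow> nat \<Rightarrow> int poly.
              (\<forall>i<k. \<forall>j<k. (q i j = 0 \<or> degree (q i j) < degree p0) \<and>
                  p i j = (if i = j then 1 else 0) + (pL i div p0) * q i j) \<and>
              (\<forall>\<xi> :: complex. (\<exists>n>0. \<xi> ^ n = 1) \<and> poly (map_poly of_int p0) \<xi> = 0 \<longrightarrow>
                 (\<forall>j<k. mv G (vvec Mh (pL j) (e j) \<xi>) =
                    (\<Sum>i<k. smul (poly (map_poly of_int ((if i = j then 1 else 0) + (pL j div p0) * q i j)) \<xi>)
                                 (vvec Mh (pL i) (e i) \<xi>))))))"
proof -
  have ob: "orlik_block Mh (L j) (e j) (pL j)" if "j<k" for j using blocks that by blast
  have sl: "sublattice (L j)" if "j<k" for j using ob[OF that] unfolding orlik_block_def by blast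
  have inv: "invariant Mh (L j)" if "j<k" for j using ob[OF that] unfolding orlik_block_def by blast
  have cg: "cyclic_generator Mh (L j) (e j) (degree (pL j))" if "j<k" for j
    using ob[OF that] unfolding orlik_block_def by blast
  have eL: "e j \<in> L j" if "j<k" for j using cg[OF that] unfolding cyclic_generator_def by blast
  have dpos: "0 < degree (pL j)" if "j<k" for j by (rule ob_dpos[OF ob[OF that]])
  have annih: "ia (pL j) Mh (e j) = 0" if "j<k" for j by (rule ob_annih[OF ob[OF that]])
  have pLnz: "pL j \<noteq> 0" if "j<k" for j using ob_monic[OF ob[OF that]] by auto
  have inl: "x \<in> lsum L k" if j: "j<k" and x: "x \<in> L j" for j x
  proof -
    define y where "y i = (if i = j then x else 0)" for i
    have "\<forall>i<k. y i \<in> L i" using x sl_zero[OF sl] unfolding y_def by auto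
    moreover have "(\<Sum>i<k. y i) = x" unfolding y_def using j by (subst sum.delta) auto
    ultimately show ?thesis unfolding lsum_def mem_Collect_eq by (intro exI[of _ y]) simp
  qed
  have lsum_mv: "mv Mh x \<in> lsum L k" if x: "x \<in> lsum L k" for x
  proof -
    from x obtain y where y: "\<forall>i<k. y i \<in> L i" and xy: "x = (\<Sum>i<k. y i)"
      unfolding lsum_def by blast
    have "mv Mh x = (\<Sum>i<k. mv Mh (y i))" unfolding xy by (rule lin_sum[OF lin_mv])
    moreover have "\<forall>i<k. mv Mh (y i) \<in> L i" using y inv unfolding invariant_def by blast
    ultimately show ?thesis unfolding lsum_def mem_Collect_eq by (intro exI[of _ "\<lambda>i. mv Mh (y i)"]) simp
  qed
  have lsum_pow: "(mv Mh ^^ n) x \<in> lsum L k" if "x \<in> lsum L k" for n x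
    using that by (induction n) (auto intro: lsum_mv)
  have Gpow: "mv G ((mv Mh ^^ n) x) = (mv Mh ^^ n) (mv G x)" if x: "x \<in> lsum L k" for n x
  proof (induction n)
    case 0 then show ?case by simp
  next
    case (Suc n)
    have "mv G ((mv Mh ^^ Suc n) x) = mv G (mv Mh ((mv Mh ^^ n) x))" by simp
    also have "\<dots> = mv Mh (mv G ((mv Mh ^^ n) x))" using g_comm lsum_pow[OF x] by blast
    also have "\<dots> = (mv Mh ^^ Suc n) (mv G x)" using Suc by simp
    finally show ?case .
  qed
  have Gpapp: "mv G (papp f Mh x) = papp f Mh (mv G x)" if x: "x \<in> lsum L k" for f x
    unfolding papp_def lin_sum[OF lin_mv] lin_smul[OF lin_mv] Gpow[OF x] ..
  have Ge: "mv G (e j) \<in> lsum L k" if "j<k" for j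
    using bij_betw_apply[OF g_aut inl[OF that eL[OF that]]] .
  have ex1: "\<exists>P. (\<forall>i<k. degree (P i) < degree (pL i)) \<and> mv G (e j) = (\<Sum>i<k. ia (P i) Mh (e i))"
    if j: "j<k" for j
  proof -
    from Ge[OF j] obtain x where x: "\<forall>i<k. x i \<in> L i" and Gx: "mv G (e j) = (\<Sum>i<k. x i)"
      unfolding lsum_def by blast
    have "\<forall>i\<in>{..<k}. \<exists>f. degree f < degree (pL i) \<and> x i = ia f Mh (e i)"
      using low_exists[OF cg _ dpos] x by blast
    from bchoice[OF this] obtain P where P: "\<forall>i\<in>{..<k}. degree (P i) < degree (pL i) \<and> x i = ia (P i) Mh (e i)"
      by blast
    have "mv G (e j) = (\<Sum>i<k. ia (P i) Mh (e i))" unfolding Gx using P by (intro sum.cong) auto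
    then show ?thesis using P by blast
  qed
  define PP where "PP j = (SOME P. (\<forall>i<k. degree (P i) < degree (pL i)) \<and> mv G (e j) = (\<Sum>i<k. ia (P i) Mh (e i)))" for j
  define p where "p i j = PP j i" for i j
  have pdeg: "\<forall>i<k. \<forall>j<k. degree (p i j) < degree (pL i)"
  proof (intro allI impI)
    fix i j assume "i<k" "j<k"
    from someI_ex[OF ex1[OF \<open>j<k\<close>]] show "degree (p i j) < degree (pL i)"
      unfolding p_def PP_def using \<open>i<k\<close> by blast
  qed
  have prep: "mv G (e j) = (\<Sum>i<k. ia (p i j) Mh (e i))" if "j<k" for j
    using someI_ex[OF ex1[OF that]] unfolding p_def PP_def by blast
  have uniq: "a i = b i" if da: "\<forall>i<k. degree (a i) < degree (pL i)"
    and db: "\<forall>i<k. degree (b i) < degree (pL i)"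
    and eq: "(\<Sum>i<k. ia (a i) Mh (e i)) = (\<Sum>i<k. ia (b i) Mh (e i))" and i: "i<k" for a b i
  proof -
    define y where "y i = ia (a i - b i) Mh (e i)" for i
    have yL: "\<forall>i<k. y i \<in> L i" unfolding y_def using sl_ia[OF sl inv eL] by blast
    have "(\<Sum>i<k. y i) = (\<Sum>i<k. ia (a i) Mh (e i)) - (\<Sum>i<k. ia (b i) Mh (e i))"
      unfolding y_def ia_diff by (rule sum_subtractf)
    then have "(\<Sum>i<k. y i) = 0" using eq by simp
    then have "y i = 0" using direct yL i by blast
    moreover have "degree (a i - b i) < degree (pL i)"
    proof -
      have "degree (a i) < degree (pL i)" "degree (b i) < degree (pL i)" using da db i by blast+
      then have "max (degree (a i)) (degree (b i)) < degree (pL i)" by simp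
      then show ?thesis using degree_diff_le_max[of "a i" "b i"] by (rule le_less_trans[rotated])
    qed
    ultimately have "a i - b i = 0" using low_zero[OF cg[OF i]] unfolding y_def by blast
    then show ?thesis by simp
  qed
  show ?thesis
  proof (rule exI[of _ p], intro conjI)
    show "\<forall>i<k. \<forall>j<k. degree (p i j) < degree (pL i)" by (rule pdeg)
    show "\<forall>j<k. mv G (e j) = (\<Sum>i<k. papp (map_poly of_int (p i j)) Mh (e i))" using prep by blast
    show "\<forall>p'. (\<forall>i<k. \<forall>j<k. degree (p' i j) < degree (pL i)) \<and>
        (\<forall>j<k. mv G (e j) = (\<Sum>i<k. papp (map_poly of_int (p' i j)) Mh (e i)))
        \<longrightarrow> (\<forall>i<k. \<forall>j<k. p' i j = p i j)"
    proof (intro allI impI)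
      fix p' i j assume H: "(\<forall>i<k. \<forall>j<k. degree (p' i j) < degree (pL i)) \<and>
        (\<forall>j<k. mv G (e j) = (\<Sum>i<k. papp (map_poly of_int (p' i j)) Mh (e i)))" and i: "i<k" and j: "j<k"
      show "p' i j = p i j"
      proof (rule uniq[of "\<lambda>i. p' i j" "\<lambda>i. p i j"])
        show "\<forall>i<k. degree (p' i j) < degree (pL i)" using H j by blast
        show "\<forall>i<k. degree (p i j) < degree (pL i)" using pdeg j by blast
        show "(\<Sum>i<k. ia (p' i j) Mh (e i)) = (\<Sum>i<k. ia (p i j) Mh (e i))"
          using H prep[OF j] j by metis
      qed (rule i)
    qed
    show "\<forall>p0 :: int poly.
        (\<forall>j<k. p0 dvd pL j) \<and> (\<forall>j<k. \<forall>x\<in>subl Mh (L j) (pL j div p0). mv G x = x)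
        \<longrightarrow> (\<exists>q :: nat \<Rightarrow> nat \<Rightarrow> int poly.
              (\<forall>i<k. \<forall>j<k. (q i j = 0 \<or> degree (q i j) < degree p0) \<and>
                  p i j = (if i = j then 1 else 0) + (pL i div p0) * q i j) \<and>
              (\<forall>\<xi> :: complex. (\<exists>n>0. \<xi> ^ n = 1) \<and> poly (map_poly of_int p0) \<xi> = 0 \<longrightarrow>
                 (\<forall>j<k. mv G (vvec Mh (pL j) (e j) \<xi>) =
                    (\<Sum>i<k. smul (poly (map_poly of_int ((if i = j then 1 else 0) + (pL j div p0) * q i j)) \<xi>)
                                 (vvec Mh (pL i) (e i) \<xi>)))))"
    proof (intro allI impI)
      fix p0 :: "int poly"
      assume H: "(\<forall>j<k. p0 dvd pL j) \<and> (\<forall>j<k. \<forall>x\<in>subl Mh (L j) (pL j div p0). mv G x = x)"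
      have dv: "p0 dvd pL j" if "j<k" for j using H that by blast
      have gfix: "mv G x = x" if "j<k" "x \<in> subl Mh (L j) (pL j div p0)" for j x using H that by blast
      define r where "r i = pL i div p0" for i
      have pLr: "pL i = p0 * r i" if "i<k" for i unfolding r_def using dv[OF that] by simp
      have p0nz: "p0 \<noteq> 0" if "i<k" for i using pLr[OF that] pLnz[OF that] by auto
      have rnz: "r i \<noteq> 0" if "i<k" for i using pLr[OF that] pLnz[OF that] by auto
      obtain m where m: "0 < m" "(mv Mh ^^ m) = id" using fin_order by blast
      have D: "r i dvd (p i j - (if i = j then 1 else 0))" if i: "i<k" and j: "j<k" for i j
      proof -
        define x where "x = ia p0 Mh (e j)"
        have xL: "x \<in> L j" unfolding x_def by (rule sl_ia[OF sl[OF j] inv[OF j] eL[OF j]])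
        have "ia (r j) Mh x = ia (pL j) Mh (e j)"
          unfolding x_def by (simp only: ia_mult[symmetric] pLr[OF j] mult.commute)
        then have "ia (r j) Mh x = 0" using annih[OF j] by simp
        then have "x \<in> subl Mh (L j) (r j)" by (rule in_subl[OF sl[OF j] inv[OF j] xL m])
        then have Gx: "mv G x = x" using gfix[OF j] unfolding r_def by blast
        have "mv G x = ia p0 Mh (mv G (e j))" unfolding x_def by (rule Gpapp[OF inl[OF j eL[OF j]]])
        also have "\<dots> = (\<Sum>i<k. ia (p0 * p i j) Mh (e i))"
          unfolding prep[OF j] by (simp only: lin_sum[OF lin_papp] ia_mult)
        finally have s1: "(\<Sum>i<k. ia (p0 * p i j) Mh (e i)) = x" using Gx by simp
        have s2: "(\<Sum>i<k. ia (p0 * (if i = j then 1 else 0)) Mh (e i)) = x"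
        proof -
          have "(\<Sum>i<k. ia (p0 * (if i = j then 1 else 0)) Mh (e i)) = (\<Sum>i<k. if i = j then ia p0 Mh (e i) else 0)"
            by (intro sum.cong refl) simp
          also have "\<dots> = x" unfolding x_def using j by (subst sum.delta) auto
          finally show ?thesis .
        qed
        define y where "y i = ia (p0 * (p i j - (if i = j then 1 else 0))) Mh (e i)" for i
        have yL: "\<forall>i<k. y i \<in> L i" unfolding y_def using sl_ia[OF sl inv eL] by blast
        have "(\<Sum>i<k. y i) = (\<Sum>i<k. ia (p0 * p i j) Mh (e i)) - (\<Sum>i<k. ia (p0 * (if i = j then 1 else 0)) Mh (e i))"
          unfolding y_def right_diff_distrib ia_diff by (rule sum_subtractf)
        then have "(\<Sum>i<k. y i) = 0" unfolding s1 s2 by simp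
        then have "y i = 0" using direct yL i by blast
        then have "pL i dvd p0 * (p i j - (if i = j then 1 else 0))"
          unfolding y_def by (rule ob_dvd[OF ob[OF i]])
        then show ?thesis unfolding pLr[OF i] using p0nz[OF i] by simp
      qed
      define q where "q i j = (p i j - (if i = j then 1 else 0)) div r i" for i j
      have pq: "p i j = (if i = j then 1 else 0) + r i * q i j" if "i<k" "j<k" for i j
        unfolding q_def using D[OF that] by simp
      have qdeg: "q i j = 0 \<or> degree (q i j) < degree p0" if i: "i<k" and j: "j<k" for i j
      proof (cases "q i j = 0")
        case True then show ?thesis by (rule disjI1)
      next
        case False
        then have qnz: "q i j \<noteq> 0" .
        have "degree (r i) + degree (q i j) = degree (r i * q i j)"
          using qnz rnz[OF i] by (simp add: degree_mult_eq)
        also have "r i * q i j = p i j - (if i = j then 1 else 0)" using pq[OF i j] by simp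
        also have "degree \<dots> < degree (pL i)"
        proof -
          have "degree (if i = j then 1 else 0 :: int poly) = 0" by simp
          then have "max (degree (p i j)) (degree (if i = j then 1 else 0 :: int poly)) < degree (pL i)"
            using pdeg i j dpos[OF i] by simp
          then show ?thesis using degree_diff_le_max by (rule le_less_trans[rotated])
        qed
        also have "degree (pL i) = degree p0 + degree (r i)"
          unfolding pLr[OF i] using p0nz[OF i] rnz[OF i] by (simp add: degree_mult_eq)
        finally have "degree (q i j) < degree p0" by simp
        then show ?thesis by (rule disjI2)
      qed
      show "\<exists>q :: nat \<Rightarrow> nat \<Rightarrow> int poly.
              (\<forall>i<k. \<forall>j<k. (q i j = 0 \<or> degree (q i j) < degree p0) \<and>
                  p i j = (if i = j then 1 else 0) + (pL i div p0) * q i j) \<and>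
              (\<forall>\<xi> :: complex. (\<exists>n>0. \<xi> ^ n = 1) \<and> poly (map_poly of_int p0) \<xi> = 0 \<longrightarrow>
                 (\<forall>j<k. mv G (vvec Mh (pL j) (e j) \<xi>) =
                    (\<Sum>i<k. smul (poly (map_poly of_int ((if i = j then 1 else 0) + (pL j div p0) * q i j)) \<xi>)
                                 (vvec Mh (pL i) (e i) \<xi>))))"
      proof (rule exI[of _ q], intro conjI allI impI)
        fix i j assume "i<k" "j<k"
        then show "q i j = 0 \<or> degree (q i j) < degree p0" by (rule qdeg)
        show "p i j = (if i = j then 1 else 0) + (pL i div p0) * q i j"
          using pq[OF \<open>i<k\<close> \<open>j<k\<close>] unfolding r_def .
      next
        fix \<xi> :: complex and j
        assume xi: "(\<exists>n>0. \<xi> ^ n = 1) \<and> poly (map_poly of_int p0) \<xi> = 0" and j: "j<k"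
        show "mv G (vvec Mh (pL j) (e j) \<xi>) =
                    (\<Sum>i<k. smul (poly (map_poly of_int ((if i = j then 1 else 0) + (pL j div p0) * q i j)) \<xi>)
                                 (vvec Mh (pL i) (e i) \<xi>))"
        proof -
        define lin where "lin = ([:-\<xi>, 1:] :: complex poly)"
        have linnz: "lin \<noteq> 0" unfolding lin_def by simp
        define U where "U = of_int_poly p0 div lin"
        have "lin dvd of_int_poly p0" unfolding lin_def using xi by (simp add: poly_eq_0_iff_dvd)
        then have P0: "(of_int_poly p0 :: complex poly) = lin * U" unfolding U_def by simp
        define W where "W i = (of_int_poly (pL i) :: complex poly) div lin" for i
        have ciL: "(of_int_poly (pL i) :: complex poly) = lin * (U * of_int_poly (r i))" if "i<k" for i
          unfolding pLr[OF that] of_int_poly_hom.hom_mult P0 by (simp add: mult.assoc)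
        have W: "W i = U * of_int_poly (r i)" if "i<k" for i
          unfolding W_def ciL[OF that] using linnz by simp
        have vv: "vvec Mh (pL i) (e i) \<xi> = papp (W i) Mh (e i)" for i
          unfolding vvec_def W_def lin_def ..
        have "mv G (vvec Mh (pL j) (e j) \<xi>) = papp (W j) Mh (mv G (e j))"
          unfolding vv by (rule Gpapp[OF inl[OF j eL[OF j]]])
        also have "\<dots> = (\<Sum>i<k. papp (W j * of_int_poly (p i j)) Mh (e i))"
          unfolding prep[OF j] by (simp only: lin_sum[OF lin_papp] papp_mult)
        also have "\<dots> = (\<Sum>i<k. smul (poly (map_poly of_int ((if i = j then 1 else 0) + (pL j div p0) * q i j)) \<xi>)
                                 (vvec Mh (pL i) (e i) \<xi>))"
        proof (intro sum.cong refl)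
          fix i assume "i \<in> {..<k}" then have i: "i<k" by simp
          define c where "c = poly (map_poly of_int ((if i = j then 1 else 0) + (pL j div p0) * q i j)) \<xi>"
          define Q where "Q = (of_int_poly (q i j) :: complex poly)"
          define Rj where "Rj = (of_int_poly (r j) :: complex poly)"
          define Ri where "Ri = (of_int_poly (r i) :: complex poly)"
          define d where "d = poly (Rj * Q) \<xi>"
          define g where "g = Rj * Q - [:d:]"
          have "poly g \<xi> = 0" unfolding g_def d_def by simp
          then have "lin dvd g" unfolding lin_def by (simp add: poly_eq_0_iff_dvd)
          then obtain T where gT: "g = lin * T" by (elim dvdE)
          have cd: "c = (if i = j then 1 else 0) + d"
            unfolding c_def d_def Rj_def Q_def r_def
            by (cases "i = j") (simp_all add: of_int_poly_hom.hom_add of_int_poly_hom.hom_mult)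
          have pp: "(of_int_poly (p i j) :: complex poly) = (if i = j then 1 else 0) + Ri * Q"
            unfolding Ri_def Q_def pq[OF i j]
            by (cases "i = j") (simp_all add: of_int_poly_hom.hom_add of_int_poly_hom.hom_mult)
          have alg: "W j * of_int_poly (p i j) - Polynomial.smult c (W i) = U * Ri * g"
          proof (cases "i = j")
            case True
            then show ?thesis unfolding pp cd g_def W[OF i] W[OF j] Ri_def Rj_def
              by (simp add: algebra_simps smult_add_left)
          next
            case False
            then show ?thesis unfolding pp cd g_def W[OF i] W[OF j] Ri_def Rj_def
              by (simp add: algebra_simps)
          qed
          also have "U * Ri * g = of_int_poly (pL i) * T"
            unfolding gT ciL[OF i] Ri_def by (simp add: algebra_simps)
          finally have alg2: "W j * of_int_poly (p i j) - Polynomial.smult c (W i) = T * of_int_poly (pL i)"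
            by (simp only: mult.commute)
          have "papp (W j * of_int_poly (p i j)) Mh (e i) - smul c (papp (W i) Mh (e i))
              = papp (W j * of_int_poly (p i j) - Polynomial.smult c (W i)) Mh (e i)"
            by (simp only: papp_diff papp_smult)
          also have "\<dots> = papp T Mh (ia (pL i) Mh (e i))" unfolding alg2 by (rule papp_mult)
          also have "\<dots> = 0" unfolding annih[OF i] by (rule lin_0[OF lin_papp])
          finally have "papp (W j * of_int_poly (p i j)) Mh (e i) = smul c (papp (W i) Mh (e i))"
            by (simp only: right_minus_eq)
          then show "papp (W j * of_int_poly (p i j)) Mh (e i) = smul (poly (map_poly of_int ((if i = j then 1 else 0) + (pL j div p0) * q i j)) \<xi>)
                                 (vvec Mh (pL i) (e i) \<xi>)"
            unfolding vv c_def .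
        qed
        finally show "mv G (vvec Mh (pL j) (e j) \<xi>) =
                    (\<Sum>i<k. smul (poly (map_poly of_int ((if i = j then 1 else 0) + (pL j div p0) * q i j)) \<xi>)
                                 (vvec Mh (pL i) (e i) \<xi>))" .
        qed
      qed
    qed
  qed
qed

end
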